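(* Let $H$ and $J$ be atomic hypergraphs on the same finite carrier $C$. Then $H$ and $J$ are cognate if and only if $H$ and $J$ have exactly the same constructions, i.e. $\mathcal C(H)=\mathcal C(J)$.
   Context: A hypergraph is a finite set $H$ of nonempty subsets of some finite set; its carrier is $\bigcup H$. For a family $F$ and a set $Y$, $F_Y=\{X\in F\mid X\subseteq Y\}$. A hypergraph partition of $H$ is a partition $\{H_1,\dots,H_n\}$ ($n\ge0$) of the set $H$ such that $\{\bigcup H_1,\dots,\bigcup H_n\}$ is a partition of $\bigcup H$; $H$ is connected if it has exactly one hypergraph partition; the finest hypergraph partition is the unique one with all blocks connected. $H$ is atomic if $\{x\}\in H$ for every $x\in\bigcup H$. Constructions of an atomic hypergraph $H$ are defined by induction on $|\bigcup H|$: (0) $\emptyset$ is the only construction of the empty hypergraph; (1) if $|\bigcup H|\ge1$, $H$ is connected, $x\in\bigcup H$ and $K$ is a construction of $H_{\bigcup H\setminus\{x\}}$, then $K\cup\{\bigcup H\}$ is a construction of $H$; (2) if $H$ is not connected with finest hypergraph partition $\{H_1,\dots,H_n\}$, $n\ge2$, and $K_i$ is a construction of $H_i$ for each $i$, then $K_1\cup\dots\cup K_n$ is a construction of $H$. $\mathcal C(H)$ denotes the set of constructions. $Y\subseteq\bigcup H$ is dispensable in $H$ when $H_Y\setminus\{Y\}$ is a connected hypergraph with carrier $Y$; $H\cup\{Y\}$ enhances $H$ when $Y$ is dispensable in $H$ and $Y\notin H$; two hypergraphs on the same carrier are cognate when related by the reflexive, symmetric, transitive closure of enhancement. *)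

theory Defs
  imports Main "HOL-Library.Disjoint_Sets"
begin

definition hypergraph :: "'a set set \<Rightarrow> bool" where
  "hypergraph H \<longleftrightarrow> finite H \<and> finite (\<Union>H) \<and> (\<forall>X\<in>H. X \<noteq> {})"

definition restr :: "'a set set \<Rightarrow> 'a set \<Rightarrow> 'a set set" where
  "restr F Y = {X \<in> F. X \<subseteq> Y}"

text \<open>A hypergraph partition: a partition of the set H into blocks H_i such that the
  carriers of the blocks (indexed by the blocks, hence injectivity) partition the carrier.\<close>
definition hyp_partition :: "'a set set \<Rightarrow> 'a set set set \<Rightarrow> bool" where
  "hyp_partition H P \<longleftrightarrow> partition_on H P \<and> inj_on Union P
      \<and> partition_on (\<Union>H) (Union ` P)"

definition hconnected :: "'a set set \<Rightarrow> bool" where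
  "hconnected H \<longleftrightarrow> (\<exists>!P. hyp_partition H P)"

definition finest_partition :: "'a set set \<Rightarrow> 'a set set set \<Rightarrow> bool" where
  "finest_partition H P \<longleftrightarrow> hyp_partition H P \<and> (\<forall>B\<in>P. hconnected B)"

definition atomic :: "'a set set \<Rightarrow> bool" where
  "atomic H \<longleftrightarrow> (\<forall>x\<in>\<Union>H. {x} \<in> H)"

inductive is_construction :: "'a set set \<Rightarrow> 'a set set \<Rightarrow> bool" where
  empty: "is_construction {} {}"
| conn: "\<Union>H \<noteq> {} \<Longrightarrow> hconnected H \<Longrightarrow> x \<in> \<Union>H
     \<Longrightarrow> is_construction (restr H (\<Union>H - {x})) K
     \<Longrightarrow> is_construction H (K \<union> {\<Union>H})"
| disconn: "\<not> hconnected H \<Longrightarrow> finest_partition H P \<Longrightarrow> card P \<ge> 2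
     \<Longrightarrow> (\<forall>B\<in>P. is_construction B (K B))
     \<Longrightarrow> is_construction H (\<Union>B\<in>P. K B)"

definition constructions :: "'a set set \<Rightarrow> 'a set set set" where
  "constructions H = {K. is_construction H K}"

definition dispensable :: "'a set set \<Rightarrow> 'a set \<Rightarrow> bool" where
  "dispensable H Y \<longleftrightarrow> Y \<subseteq> \<Union>H \<and> hconnected (restr H Y - {Y})
      \<and> \<Union>(restr H Y - {Y}) = Y"

definition enhances :: "'a set set \<Rightarrow> 'a set set \<Rightarrow> bool" where
  "enhances H' H \<longleftrightarrow> (\<exists>Y. Y \<noteq> {} \<and> dispensable H Y \<and> Y \<notin> H \<and> H' = H \<union> {Y})"

definition cognate :: "'a set set \<Rightarrow> 'a set set \<Rightarrow> bool" where
  "cognate H J \<longleftrightarrow> equivclp enhances H J"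

end

theory Submission
  imports Defs
begin

definition ne :: "'a set set \<Rightarrow> bool" where
  "ne H \<longleftrightarrow> (\<forall>X\<in>H. X \<noteq> {})"

definition splits :: "'a set set \<Rightarrow> 'a set \<Rightarrow> 'a set \<Rightarrow> bool" where
  "splits G A B \<longleftrightarrow> A \<noteq> {} \<and> B \<noteq> {} \<and> A \<inter> B = {} \<and> A \<union> B = \<Union>G
     \<and> (\<forall>X\<in>G. X \<subseteq> A \<or> X \<subseteq> B)"

definition sat :: "'a set set \<Rightarrow> 'a set set" where
  "sat H = {Y. Y \<noteq> {} \<and> Y \<subseteq> \<Union>H \<and> hconnected (restr H Y) \<and> \<Union>(restr H Y) = Y}"

lemma hp_disj:
  assumes "hyp_partition G P" "B1 \<in> P" "B2 \<in> P" "B1 \<noteq> B2"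
  shows "\<Union>B1 \<inter> \<Union>B2 = {}"
proof -
  have "\<Union>B1 \<noteq> \<Union>B2" using assms unfolding hyp_partition_def inj_on_def by blast
  moreover have "disjoint (Union ` P)" using assms(1) unfolding hyp_partition_def partition_on_def by blast
  ultimately show ?thesis using assms(2,3) by (meson disjointD imageI)
qed

lemma hp_sub: "hyp_partition G P \<Longrightarrow> B \<in> P \<Longrightarrow> B \<subseteq> G"
  unfolding hyp_partition_def partition_on_def by blast

lemma hp_cover: "hyp_partition G P \<Longrightarrow> X \<in> G \<Longrightarrow> \<exists>B\<in>P. X \<in> B"
  unfolding hyp_partition_def partition_on_def by blast

lemma hp_carrier: "hyp_partition G P \<Longrightarrow> \<Union>G = (\<Union>B\<in>P. \<Union>B)"
  unfolding hyp_partition_def partition_on_def by blast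

lemma hp_ne: "hyp_partition G P \<Longrightarrow> B \<in> P \<Longrightarrow> \<Union>B \<noteq> {}"
  unfolding hyp_partition_def partition_on_def by blast

lemma hp_restr:
  assumes "ne G" "hyp_partition G P" "B \<in> P"
  shows "restr G (\<Union>B) = B"
proof
  show "B \<subseteq> restr G (\<Union>B)" using hp_sub[OF assms(2,3)] unfolding restr_def by blast
  show "restr G (\<Union>B) \<subseteq> B"
  proof
    fix X assume X: "X \<in> restr G (\<Union>B)"
    then have XG: "X \<in> G" and XB: "X \<subseteq> \<Union>B" unfolding restr_def by auto
    obtain B' where B': "B' \<in> P" "X \<in> B'" using hp_cover[OF assms(2) XG] by blast
    show "X \<in> B"
    proof (rule ccontr)
      assume "X \<notin> B"
      then have "B' \<noteq> B" using B' by auto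
      then have "\<Union>B' \<inter> \<Union>B = {}" using hp_disj[OF assms(2) B'(1) assms(3)] by blast
      then have "X = {}" using XB B' by blast
      then show False using XG assms(1) unfolding ne_def by blast
    qed
  qed
qed

lemma hp_single: "ne G \<Longrightarrow> G \<noteq> {} \<Longrightarrow> hyp_partition G {G}"
  unfolding hyp_partition_def ne_def
  by (auto intro!: partition_on_space)

lemma hp_empty: "hyp_partition {} {}"
  unfolding hyp_partition_def by (simp add: partition_on_empty)

lemma restr_carrier_split:
  assumes "splits G A B"
  shows "\<Union>(restr G A) = A"
proof
  show "\<Union>(restr G A) \<subseteq> A" unfolding restr_def by blast
  show "A \<subseteq> \<Union>(restr G A)"
  proof
    fix a assume a: "a \<in> A"
    then have "a \<in> \<Union>G" using assms unfolding splits_def by blast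
    then obtain X where X: "X \<in> G" "a \<in> X" by blast
    have "X \<subseteq> A \<or> X \<subseteq> B" using assms X(1) unfolding splits_def by blast
    moreover have "A \<inter> B = {}" using assms unfolding splits_def by blast
    ultimately have "X \<subseteq> A" using a X(2) by blast
    then show "a \<in> \<Union>(restr G A)" using X unfolding restr_def by blast
  qed
qed

lemma split_not_conn:
  assumes ne: "ne G" and sp: "splits G A B"
  shows "\<not> hconnected G"
proof
  assume c: "hconnected G"
  have spB: "splits G B A" using sp unfolding splits_def by blast
  have rA: "\<Union>(restr G A) = A" by (rule restr_carrier_split[OF sp])
  have rB: "\<Union>(restr G B) = B" by (rule restr_carrier_split[OF spB])
  have AB: "A \<noteq> {}" "B \<noteq> {}" "A \<inter> B = {}" "A \<union> B = \<Union>G" using sp unfolding splits_def by blast+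
  have AnB: "A \<noteq> B"
  proof
    assume "A = B" then show False using AB(1,3) by simp
  qed
  have neq: "restr G A \<noteq> restr G B"
  proof
    assume "restr G A = restr G B"
    then have "\<Union>(restr G A) = \<Union>(restr G B)" by (rule arg_cong)
    then show False using AnB rA rB by argo
  qed
  have Gne: "G \<noteq> {}" using AB(1) AB(4) by auto
  have dAB: "restr G A \<inter> restr G B = {}"
  proof (rule ccontr)
    assume "restr G A \<inter> restr G B \<noteq> {}"
    then obtain X where "X \<in> G" "X \<subseteq> A" "X \<subseteq> B" unfolding restr_def by blast
    then show False using AB(3) ne unfolding ne_def by blast
  qed
  have cov: "restr G A \<union> restr G B = G" using sp unfolding splits_def restr_def by blast
  have img: "Union ` {restr G A, restr G B} = {A, B}" using rA rB by simp
  have "hyp_partition G {restr G A, restr G B}"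
    unfolding hyp_partition_def
  proof (intro conjI)
    show "partition_on G {restr G A, restr G B}"
    proof (rule partition_onI)
      show "\<Union>{restr G A, restr G B} = G" using cov by simp
      show "{} \<notin> {restr G A, restr G B}" using rA rB AB(1,2) by auto
      fix p q assume "p \<in> {restr G A, restr G B}" "q \<in> {restr G A, restr G B}" "p \<noteq> q"
      then show "disjnt p q" using dAB unfolding disjnt_def by auto
    qed
    show "inj_on Union {restr G A, restr G B}" using neq not_sym[OF neq] rA rB AnB by auto
    show "partition_on (\<Union>G) (Union ` {restr G A, restr G B})"
      unfolding img
    proof (rule partition_onI)
      show "\<Union>{A, B} = \<Union>G" using AB(4) by simp
      show "{} \<notin> {A, B}" using AB(1,2) by auto
      fix p q assume "p \<in> {A, B}" "q \<in> {A, B}" "p \<noteq> q"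
      then show "disjnt p q" using AB(3) unfolding disjnt_def by auto
    qed
  qed
  moreover have "hyp_partition G {G}" by (rule hp_single[OF ne Gne])
  moreover have "{restr G A, restr G B} \<noteq> {G}" using neq by auto
  ultimately show False using c unfolding hconnected_def by blast
qed

lemma hp_unique:
  assumes ne: "ne G" and ns: "\<not> (\<exists>A B. splits G A B)" and hp: "hyp_partition G P"
  shows "P = (if G = {} then {} else {G})"
proof (cases "G = {}")
  case True
  then show ?thesis using hp unfolding hyp_partition_def by (simp add: partition_on_empty)
next
  case False
  have UP: "\<Union>P = G" using hp unfolding hyp_partition_def partition_on_def by blast
  then obtain B where B: "B \<in> P" using False by blast
  have only: "\<forall>B'\<in>P. B' = B"
  proof (rule ccontr)
    assume "\<not> (\<forall>B'\<in>P. B' = B)"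
    then obtain B' where B': "B' \<in> P" "B' \<noteq> B" by blast
    have d: "\<Union>B' \<inter> \<Union>B = {}" using hp_disj[OF hp B'(1) B B'(2)] .
    have "splits G (\<Union>B) (\<Union>G - \<Union>B)"
      unfolding splits_def
    proof (intro conjI)
      show "\<Union>B \<noteq> {}" using hp_ne[OF hp B] .
      show "\<Union>G - \<Union>B \<noteq> {}" using hp_ne[OF hp B'(1)] hp_sub[OF hp B'(1)] d by blast
      show "\<Union>B \<inter> (\<Union>G - \<Union>B) = {}" by blast
      show "\<Union>B \<union> (\<Union>G - \<Union>B) = \<Union>G" using hp_sub[OF hp B] by blast
      show "\<forall>X\<in>G. X \<subseteq> \<Union>B \<or> X \<subseteq> \<Union>G - \<Union>B"
      proof
        fix X assume XG: "X \<in> G"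
        obtain B'' where B'': "B'' \<in> P" "X \<in> B''" using hp_cover[OF hp XG] by blast
        show "X \<subseteq> \<Union>B \<or> X \<subseteq> \<Union>G - \<Union>B"
        proof (cases "B'' = B")
          case True then show ?thesis using B'' by blast
        next
          case False
          then have "\<Union>B'' \<inter> \<Union>B = {}" using hp_disj[OF hp B''(1) B] by blast
          then show ?thesis using B'' XG by blast
        qed
      qed
    qed
    then show False using ns by blast
  qed
  then have "P = {B}" using B by blast
  then show ?thesis using UP False by auto
qed

lemma conn_iff: "ne G \<Longrightarrow> hconnected G \<longleftrightarrow> \<not> (\<exists>A B. splits G A B)"
proof
  assume "ne G" "hconnected G" then show "\<not> (\<exists>A B. splits G A B)" using split_not_conn by blast
next
  assume ne: "ne G" and ns: "\<not> (\<exists>A B. splits G A B)"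
  have "hyp_partition G (if G = {} then {} else {G})"
    using hp_empty hp_single[OF ne] by auto
  then show "hconnected G" unfolding hconnected_def using hp_unique[OF ne ns] by blast
qed

lemma conn_empty: "hconnected {}"
proof -
  have "ne {}" by (simp add: ne_def)
  moreover have "\<not> (\<exists>A B. splits {} A B)" by (simp add: splits_def)
  ultimately show ?thesis using conn_iff by blast
qed


lemma restr_iff: "X \<in> restr G Z \<longleftrightarrow> X \<in> G \<and> X \<subseteq> Z"
  unfolding restr_def by simp

lemma restr_restr: "Y \<subseteq> Z \<Longrightarrow> restr (restr G Z) Y = restr G Y"
  unfolding restr_def by auto

lemma restr_sub: "restr G Z \<subseteq> G"
  unfolding restr_def by auto

lemma restr_carrier_sub: "\<Union>(restr G Z) \<subseteq> Z"
  unfolding restr_def by auto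

lemma ne_sub: "ne G \<Longrightarrow> H \<subseteq> G \<Longrightarrow> ne H"
  unfolding ne_def by auto

lemma ne_restr: "ne G \<Longrightarrow> ne (restr G Z)"
  using ne_sub restr_sub by blast

lemma restr_all: "restr G (\<Union>G) = G"
  unfolding restr_def by auto

lemma sat_iff: "Y \<in> sat G \<longleftrightarrow> Y \<noteq> {} \<and> Y \<subseteq> \<Union>G \<and> hconnected (restr G Y) \<and> \<Union>(restr G Y) = Y"
  unfolding sat_def by (rule mem_Collect_eq)

lemma sat_elem: "Y \<in> sat G \<Longrightarrow> Y \<noteq> {} \<and> Y \<subseteq> \<Union>G \<and> hconnected (restr G Y) \<and> \<Union>(restr G Y) = Y"
  using sat_iff by blast

lemma sat_restr: "sat (restr G Z) = {Y \<in> sat G. Y \<subseteq> Z}"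
proof
  show "sat (restr G Z) \<subseteq> {Y \<in> sat G. Y \<subseteq> Z}"
  proof
    fix Y assume Y: "Y \<in> sat (restr G Z)"
    then have Y1: "Y \<noteq> {}" "Y \<subseteq> \<Union>(restr G Z)" "hconnected (restr (restr G Z) Y)"
      "\<Union>(restr (restr G Z) Y) = Y" using sat_elem[OF Y] by simp_all
    have YZ: "Y \<subseteq> Z" using Y1(2) restr_carrier_sub by (rule order_trans)
    have "Y \<subseteq> \<Union>G" using Y1(2) Union_mono[OF restr_sub] by (rule order_trans)
    moreover have "restr (restr G Z) Y = restr G Y" using restr_restr[OF YZ] .
    ultimately have "Y \<in> sat G" using Y1 unfolding sat_iff by simp
    then show "Y \<in> {Y \<in> sat G. Y \<subseteq> Z}" using YZ by blast
  qed
  show "{Y \<in> sat G. Y \<subseteq> Z} \<subseteq> sat (restr G Z)"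
  proof
    fix Y assume Y: "Y \<in> {Y \<in> sat G. Y \<subseteq> Z}"
    then have YS: "Y \<in> sat G" and YZ: "Y \<subseteq> Z" by simp_all
    have Y1: "Y \<noteq> {}" "hconnected (restr G Y)" "\<Union>(restr G Y) = Y"
      using sat_elem[OF YS] by simp_all
    have "restr G Y \<subseteq> restr G Z" using YZ unfolding restr_def by blast
    then have "Y \<subseteq> \<Union>(restr G Z)" using Y1(3) by blast
    then show "Y \<in> sat (restr G Z)" using Y1 restr_restr[OF YZ] unfolding sat_iff by simp
  qed
qed

lemma sat_subset_restr: "sat (restr G Z) \<subseteq> sat G"
  using sat_restr by blast


lemma sat_mem:
  assumes ne: "ne G" and X: "X \<in> G"
  shows "X \<in> sat G"
proof -
  have Xne: "X \<noteq> {}" using ne X unfolding ne_def by blast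
  have XrX: "X \<in> restr G X" using X by (simp add: restr_iff)
  have car: "\<Union>(restr G X) = X" by (rule antisym[OF restr_carrier_sub Union_upper[OF XrX]])
  have "\<not> (\<exists>A B. splits (restr G X) A B)"
  proof
    assume "\<exists>A B. splits (restr G X) A B"
    then obtain A B where sp: "splits (restr G X) A B" by blast
    then have "X \<subseteq> A \<or> X \<subseteq> B" "A \<union> B = X" "A \<inter> B = {}" "A \<noteq> {}" "B \<noteq> {}"
      using XrX car unfolding splits_def by auto
    then show False by blast
  qed
  then have "hconnected (restr G X)" using conn_iff[OF ne_restr[OF ne]] by blast
  moreover have "X \<subseteq> \<Union>G" using X by blast
  ultimately show ?thesis using Xne car unfolding sat_iff by blast
qed

lemma conn_sat:
  assumes "ne G" "\<Union>G \<noteq> {}"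
  shows "hconnected G \<longleftrightarrow> \<Union>G \<in> sat G"
  using assms restr_all[of G] unfolding sat_iff by auto

lemma sat_in_block:
  assumes ne: "ne G" and hp: "hyp_partition G P" and Y: "Y \<in> sat G"
  shows "\<exists>B\<in>P. Y \<subseteq> \<Union>B"
proof -
  have Y1: "Y \<noteq> {}" "Y \<subseteq> \<Union>G" "hconnected (restr G Y)" "\<Union>(restr G Y) = Y"
    using sat_elem[OF Y] by simp_all
  obtain y where y: "y \<in> Y" using Y1(1) by blast
  then have "y \<in> (\<Union>B\<in>P. \<Union>B)" using Y1(2) hp_carrier[OF hp] by blast
  then obtain B0 where B0: "B0 \<in> P" "y \<in> \<Union>B0" by blast
  show ?thesis
  proof (rule ccontr)
    assume nb: "\<not> (\<exists>B\<in>P. Y \<subseteq> \<Union>B)"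
    have "splits (restr G Y) (Y \<inter> \<Union>B0) (Y - \<Union>B0)"
      unfolding splits_def
    proof (intro conjI)
      show "Y \<inter> \<Union>B0 \<noteq> {}" using y B0 by blast
      show "Y - \<Union>B0 \<noteq> {}" using nb B0(1) by blast
      show "Y \<inter> \<Union>B0 \<inter> (Y - \<Union>B0) = {}" by blast
      show "Y \<inter> \<Union>B0 \<union> (Y - \<Union>B0) = \<Union>(restr G Y)" using Y1(4) by blast
      show "\<forall>X\<in>restr G Y. X \<subseteq> Y \<inter> \<Union>B0 \<or> X \<subseteq> Y - \<Union>B0"
      proof
        fix X assume X: "X \<in> restr G Y"
        then have XG: "X \<in> G" and XY: "X \<subseteq> Y" unfolding restr_def by auto
        obtain B' where B': "B' \<in> P" "X \<in> B'" using hp_cover[OF hp XG] by blast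
        show "X \<subseteq> Y \<inter> \<Union>B0 \<or> X \<subseteq> Y - \<Union>B0"
        proof (cases "B' = B0")
          case True then show ?thesis using B' XY by blast
        next
          case False
          then have "\<Union>B' \<inter> \<Union>B0 = {}" using hp_disj[OF hp B'(1) B0(1)] by blast
          then show ?thesis using B' XY by blast
        qed
      qed
    qed
    then show False using split_not_conn[OF ne_restr[OF ne]] Y1(3) by blast
  qed
qed

lemma atomic_restr: "atomic H \<Longrightarrow> atomic (restr H Z)"
  unfolding atomic_def restr_def by auto

lemma atomic_carrier: "atomic H \<Longrightarrow> \<Union>(restr H Z) = Z \<inter> \<Union>H"
  unfolding atomic_def restr_def by auto


lemma carrier_empty: "ne J \<Longrightarrow> \<Union>J = {} \<Longrightarrow> J = {}"
  unfolding ne_def by auto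

lemma constr_transfer:
  assumes "is_construction H K"
  shows "\<forall>J. ne H \<longrightarrow> atomic H \<longrightarrow> ne J \<longrightarrow> atomic J \<longrightarrow> \<Union>J = \<Union>H \<longrightarrow> sat J = sat H
           \<longrightarrow> is_construction J K"
  using assms
proof (induction rule: is_construction.induct)
  case empty
  show ?case
  proof (intro allI impI)
    fix J :: "'a set set" assume "ne J" "\<Union>J = \<Union>{}"
    then have "J = {}" using carrier_empty by simp
    then show "is_construction J {}" using is_construction.empty by simp
  qed
next
  case (conn H x K)
  show ?case
  proof (intro allI impI)
    fix J assume neH: "ne H" and atH: "atomic H" and neJ: "ne J" and atJ: "atomic J"
      and car: "\<Union>J = \<Union>H" and sJ: "sat J = sat H"
    have "\<Union>H \<in> sat H" using conn_sat[OF neH conn.hyps(1)] conn.hyps(2) by blast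
    then have "\<Union>J \<in> sat J" using sJ car by simp
    then have cJ: "hconnected J" using conn_sat[OF neJ] conn.hyps(1) car by simp
    let ?Z = "\<Union>H - {x}"
    have "is_construction (restr J ?Z) K"
      using conn.IH ne_restr[OF neH] atomic_restr[OF atH] ne_restr[OF neJ] atomic_restr[OF atJ]
        atomic_carrier[OF atH] atomic_carrier[OF atJ] car sat_restr[of J ?Z] sat_restr[of H ?Z] sJ
      by simp
    then have "is_construction J (K \<union> {\<Union>J})"
      using is_construction.conn[of J x K] conn.hyps(1,3) cJ car by simp
    then show "is_construction J (K \<union> {\<Union>H})" using car by simp
  qed
next
  case (disconn H P K)
  show ?case
  proof (intro allI impI)
    fix J assume neH: "ne H" and atH: "atomic H" and neJ: "ne J" and atJ: "atomic J"
      and car: "\<Union>J = \<Union>H" and sJ: "sat J = sat H"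
    have hp: "hyp_partition H P" and bc: "\<forall>B\<in>P. hconnected B"
      using disconn.hyps(2) unfolding finest_partition_def by blast+
    have BH: "restr H (\<Union>B) = B" if "B \<in> P" for B using hp_restr[OF neH hp that] .
    have cS: "\<Union>B \<in> sat H" if B: "B \<in> P" for B
    proof -
      have "\<Union>B \<subseteq> \<Union>H" using hp_sub[OF hp B] by (rule Union_mono)
      then show ?thesis using hp_ne[OF hp B] BH[OF B] bc B unfolding sat_iff by simp
    qed
    have cJ: "hconnected (restr J (\<Union>B)) \<and> \<Union>(restr J (\<Union>B)) = \<Union>B" if B: "B \<in> P" for B
      using cS[OF B] sJ sat_elem[of "\<Union>B" J] by simp
    define f where "f = (\<lambda>B. restr J (\<Union>B))"
    define P' where "P' = f ` P"
    have fcar: "\<Union>(f B) = \<Union>B" if "B \<in> P" for B using cJ[OF that] unfolding f_def by simp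
    have injf: "inj_on f P"
    proof (rule inj_onI)
      fix B1 B2 assume B: "B1 \<in> P" "B2 \<in> P" "f B1 = f B2"
      then have "\<Union>B1 = \<Union>B2" using fcar by metis
      then show "B1 = B2" using hp B(1,2) unfolding hyp_partition_def inj_on_def by blast
    qed
    have disjf: "f B1 \<inter> f B2 = {}" if B: "B1 \<in> P" "B2 \<in> P" "B1 \<noteq> B2" for B1 B2
    proof (rule ccontr)
      assume "f B1 \<inter> f B2 \<noteq> {}"
      then obtain X where X0: "X \<in> f B1" "X \<in> f B2" by blast
      then have X: "X \<in> J" "X \<subseteq> \<Union>B1" "X \<subseteq> \<Union>B2" unfolding f_def restr_iff by simp_all
      have "\<Union>B1 \<inter> \<Union>B2 = {}" using hp_disj[OF hp B] .
      then have "X = {}" using X by blast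
      then show False using X(1) neJ unfolding ne_def by blast
    qed
    have img: "Union ` P' = Union ` P" unfolding P'_def image_image using fcar by simp
    have "hyp_partition J P'"
      unfolding hyp_partition_def
    proof (intro conjI)
      show "partition_on J P'"
      proof (rule partition_onI)
        show "\<Union>P' = J"
        proof
          show "\<Union>P' \<subseteq> J" unfolding P'_def f_def using restr_sub by blast
          show "J \<subseteq> \<Union>P'"
          proof
            fix X assume XJ: "X \<in> J"
            then have "X \<in> sat H" using sat_mem[OF neJ] sJ by blast
            then obtain B where B: "B \<in> P" "X \<subseteq> \<Union>B" using sat_in_block[OF neH hp] by blast
            then have "X \<in> f B" unfolding f_def restr_iff using XJ by simp
            then show "X \<in> \<Union>P'" unfolding P'_def using B(1) by blast
          qed
        qed
        show "{} \<notin> P'"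
        proof
          assume "{} \<in> P'"
          then obtain B where "B \<in> P" "f B = {}" unfolding P'_def by blast
          then show False using fcar hp_ne[OF hp] by fastforce
        qed
        fix p q assume "p \<in> P'" "q \<in> P'" "p \<noteq> q"
        then show "disjnt p q" unfolding P'_def disjnt_def using disjf by blast
      qed
      show "inj_on Union P'"
      proof (rule inj_onI)
        fix p q assume pq: "p \<in> P'" "q \<in> P'" "\<Union>p = \<Union>q"
        then obtain B1 B2 where B: "B1 \<in> P" "B2 \<in> P" "p = f B1" "q = f B2" unfolding P'_def by blast
        then have "\<Union>B1 = \<Union>B2" using pq(3) fcar by metis
        then have "B1 = B2" using hp B(1,2) unfolding hyp_partition_def inj_on_def by blast
        then show "p = q" using B by simp
      qed
      show "partition_on (\<Union>J) (Union ` P')"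
        unfolding img car using hp unfolding hyp_partition_def by blast
    qed
    moreover have "\<forall>B'\<in>P'. hconnected B'" unfolding P'_def f_def using cJ by blast
    ultimately have fpJ: "finest_partition J P'" unfolding finest_partition_def by blast
    have cardP: "card P' = card P" unfolding P'_def using injf by (rule card_image)
    have ncJ: "\<not> hconnected J"
    proof
      assume cj: "hconnected J"
      have "P \<noteq> {}" using disconn.hyps(3) by auto
      then obtain B where "B \<in> P" by blast
      then have "\<Union>H \<noteq> {}" using hp_ne[OF hp] hp_sub[OF hp] by blast
      then have "\<Union>J \<in> sat J" using conn_sat[OF neJ] cj car by simp
      then have "\<Union>H \<in> sat H" using sJ car by simp
      then have "hconnected H" using conn_sat[OF neH] \<open>\<Union>H \<noteq> {}\<close> by simp
      then show False using disconn.hyps(1) by simp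
    qed
    define K' where "K' = (\<lambda>B'. K (restr H (\<Union>B')))"
    have K'f: "K' (f B) = K B" if "B \<in> P" for B unfolding K'_def using fcar[OF that] BH[OF that] by simp
    have cons: "\<forall>B'\<in>P'. is_construction B' (K' B')"
    proof
      fix B' assume "B' \<in> P'"
      then obtain B where B: "B \<in> P" "B' = f B" unfolding P'_def by blast
      have neB: "ne B" using ne_sub[OF neH hp_sub[OF hp B(1)]] .
      have atB: "atomic B" using atomic_restr[OF atH, of "\<Union>B"] BH[OF B(1)] by simp
      have sB: "sat (f B) = sat B"
        using sat_restr[of J "\<Union>B"] sat_restr[of H "\<Union>B"] BH[OF B(1)] sJ unfolding f_def by simp
      have IH: "\<forall>J. ne B \<longrightarrow> atomic B \<longrightarrow> ne J \<longrightarrow> atomic J \<longrightarrow> \<Union>J = \<Union>B \<longrightarrow> sat J = sat B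
           \<longrightarrow> is_construction J (K B)" using disconn.IH B(1) by blast
      have "is_construction (f B) (K B)"
        using IH neB atB ne_restr[OF neJ] atomic_restr[OF atJ] fcar[OF B(1)] sB unfolding f_def by blast
      then show "is_construction B' (K' B')" using B K'f by simp
    qed
    have "is_construction J (\<Union>B'\<in>P'. K' B')"
      using is_construction.disconn[OF ncJ fpJ _ cons] cardP disconn.hyps(3) by simp
    moreover have "(\<Union>B'\<in>P'. K' B') = (\<Union>B\<in>P. K B)"
      unfolding P'_def image_image using K'f by simp
    ultimately show "is_construction J (\<Union>B\<in>P. K B)" by simp
  qed
qed


lemma constr_sat:
  assumes "is_construction H K"
  shows "ne H \<longrightarrow> K \<subseteq> sat H"
  using assms
proof (induction rule: is_construction.induct)
  case empty
  then show ?case by simp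
next
  case (conn H x K)
  show ?case
  proof
    assume neH: "ne H"
    have "K \<subseteq> sat H" using conn.IH ne_restr[OF neH] sat_subset_restr by blast
    moreover have "\<Union>H \<in> sat H" using conn_sat[OF neH conn.hyps(1)] conn.hyps(2) by blast
    ultimately show "K \<union> {\<Union>H} \<subseteq> sat H" by blast
  qed
next
  case (disconn H P K)
  show ?case
  proof
    assume neH: "ne H"
    have hp: "hyp_partition H P" using disconn.hyps(2) unfolding finest_partition_def by blast
    have "K B \<subseteq> sat H" if B: "B \<in> P" for B
    proof -
      have "ne B" using ne_sub[OF neH hp_sub[OF hp B]] .
      then have "K B \<subseteq> sat B" using disconn.IH B by blast
      moreover have "sat B \<subseteq> sat H" using sat_subset_restr[of H "\<Union>B"] hp_restr[OF neH hp B] by simp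
      ultimately show ?thesis by (rule order_trans)
    qed
    then show "(\<Union>B\<in>P. K B) \<subseteq> sat H" by blast
  qed
qed

lemma hp_union:
  assumes h1: "hyp_partition G1 P1" and h2: "hyp_partition G2 P2"
    and d: "\<Union>G1 \<inter> \<Union>G2 = {}" and n1: "ne G1" and n2: "ne G2"
  shows "hyp_partition (G1 \<union> G2) (P1 \<union> P2)"
  unfolding hyp_partition_def
proof (intro conjI)
  have p1: "partition_on G1 P1" and p2: "partition_on G2 P2"
    using h1 h2 unfolding hyp_partition_def by blast+
  have q1: "partition_on (\<Union>G1) (Union ` P1)" and q2: "partition_on (\<Union>G2) (Union ` P2)"
    using h1 h2 unfolding hyp_partition_def by blast+
  have G12: "G1 \<inter> G2 = {}"
  proof (rule ccontr)
    assume "G1 \<inter> G2 \<noteq> {}"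
    then obtain X where "X \<in> G1" "X \<in> G2" by blast
    moreover then have "X \<subseteq> \<Union>G1 \<inter> \<Union>G2" by blast
    ultimately show False using d n1 unfolding ne_def by blast
  qed
  show "partition_on (G1 \<union> G2) (P1 \<union> P2)"
    unfolding partition_on_def
  proof (intro conjI)
    show "\<Union>(P1 \<union> P2) = G1 \<union> G2" using partition_onD1[OF p1] partition_onD1[OF p2] by simp
    show "disjoint (P1 \<union> P2)"
      using disjoint_union[OF partition_onD2[OF p1] partition_onD2[OF p2]]
        partition_onD1[OF p1] partition_onD1[OF p2] G12 by simp
    show "{} \<notin> P1 \<union> P2" using partition_onD3[OF p1] partition_onD3[OF p2] by simp
  qed
  show "inj_on Union (P1 \<union> P2)"
  proof (rule inj_onI)
    fix p q assume p: "p \<in> P1 \<union> P2" and q: "q \<in> P1 \<union> P2" and e: "\<Union>p = \<Union>q"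
    have ms: "False" if "a \<in> P1" "b \<in> P2" "\<Union>a = \<Union>b" for a b
    proof -
      have "\<Union>a \<subseteq> \<Union>G1" using hp_sub[OF h1 that(1)] by (rule Union_mono)
      moreover have "\<Union>b \<subseteq> \<Union>G2" using hp_sub[OF h2 that(2)] by (rule Union_mono)
      moreover have "\<Union>a \<noteq> {}" using hp_ne[OF h1 that(1)] .
      ultimately show False using d that(3) by blast
    qed
    have i1: "inj_on Union P1" and i2: "inj_on Union P2" using h1 h2 unfolding hyp_partition_def by blast+
    show "p = q"
      using p q e ms[of p q] ms[of q p] inj_onD[OF i1, of p q] inj_onD[OF i2, of p q] by auto
  qed
  show "partition_on (\<Union>(G1 \<union> G2)) (Union ` (P1 \<union> P2))"
    unfolding partition_on_def image_Un
  proof (intro conjI)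
    show "\<Union>(Union ` P1 \<union> Union ` P2) = \<Union>(G1 \<union> G2)"
      using partition_onD1[OF q1] partition_onD1[OF q2] by simp
    show "disjoint (Union ` P1 \<union> Union ` P2)"
      using disjoint_union[OF partition_onD2[OF q1] partition_onD2[OF q2]]
        partition_onD1[OF q1] partition_onD1[OF q2] d by simp
    show "{} \<notin> Union ` P1 \<union> Union ` P2" using partition_onD3[OF q1] partition_onD3[OF q2] by simp
  qed
qed

lemma fp_exists:
  assumes "finite (\<Union>H)" "ne H"
  shows "\<exists>P. finest_partition H P"
  using assms
proof (induction "card (\<Union>H)" arbitrary: H rule: less_induct)
  case less
  show ?case
  proof (cases "hconnected H")
    case True
    have "hyp_partition H (if H = {} then {} else {H})"
      using hp_empty hp_single[OF less.prems(2)] by auto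
    moreover have "\<forall>B\<in>(if H = {} then {} else {H}). hconnected B" using True by simp
    ultimately show ?thesis unfolding finest_partition_def by blast
  next
    case False
    then obtain A B where sp: "splits H A B" using conn_iff[OF less.prems(2)] by blast
    have spB: "splits H B A" using sp unfolding splits_def by blast
    have rA: "\<Union>(restr H A) = A" by (rule restr_carrier_split[OF sp])
    have rB: "\<Union>(restr H B) = B" by (rule restr_carrier_split[OF spB])
    have AB: "A \<noteq> {}" "B \<noteq> {}" "A \<inter> B = {}" "A \<union> B = \<Union>H" using sp unfolding splits_def by simp_all
    have psA: "A \<subset> \<Union>H" using AB by blast
    have psB: "B \<subset> \<Union>H" using AB by blast
    have fA: "finite A" and fB: "finite B" using less.prems(1) psA psB finite_subset by blast+
    have cA: "card A < card (\<Union>H)" using psubset_card_mono[OF less.prems(1) psA] .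
    have "\<exists>P. finest_partition (restr H A) P"
      using less.hyps[of "restr H A"] cA rA fA ne_restr[OF less.prems(2)] by simp
    then obtain PA where PA: "finest_partition (restr H A) PA" by blast
    have cB: "card B < card (\<Union>H)" using psubset_card_mono[OF less.prems(1) psB] .
    have "\<exists>P. finest_partition (restr H B) P"
      using less.hyps[of "restr H B"] cB rB fB ne_restr[OF less.prems(2)] by simp
    then obtain PB where PB: "finest_partition (restr H B) PB" by blast
    have HAB: "restr H A \<union> restr H B = H" using sp unfolding splits_def restr_def by blast
    have "hyp_partition (restr H A \<union> restr H B) (PA \<union> PB)"
      using hp_union[of "restr H A" PA "restr H B" PB] PA PB rA rB AB(3) ne_restr[OF less.prems(2)]
      unfolding finest_partition_def by simp
    then have "finest_partition H (PA \<union> PB)"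
      using HAB PA PB unfolding finest_partition_def by auto
    then show ?thesis by blast
  qed
qed

lemma fin_H: "finite (\<Union>H) \<Longrightarrow> finite H"
  using finite_UnionD by blast

lemma fp_card:
  assumes fin: "finite (\<Union>H)" and ne: "ne H" and nc: "\<not> hconnected H" and fp: "finest_partition H P"
  shows "card P \<ge> 2"
proof -
  have hp: "hyp_partition H P" and bc: "\<forall>B\<in>P. hconnected B" using fp unfolding finest_partition_def by blast+
  have "P \<subseteq> Pow H" using hp_sub[OF hp] by blast
  then have finP: "finite P" using fin_H[OF fin] finite_subset by blast
  have UP: "\<Union>P = H" using hp unfolding hyp_partition_def partition_on_def by blast
  show ?thesis
  proof (rule ccontr)
    assume "\<not> 2 \<le> card P"
    then have "card P = 0 \<or> card P = 1" by linarith
    then show False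
    proof
      assume "card P = 0"
      then have "P = {}" using finP by simp
      then have "H = {}" using UP by simp
      then have "hconnected H" using conn_empty by simp
      then show False using nc by contradiction
    next
      assume "card P = 1"
      then obtain B where "P = {B}" using card_1_singletonE by blast
      then have "H = B" "B \<in> P" using UP by auto
      then show False using nc bc by simp
    qed
  qed
qed

lemma fp_smaller:
  assumes fin: "finite (\<Union>H)" and ne: "ne H" and hp: "hyp_partition H P" and c2: "card P \<ge> 2"
    and B: "B \<in> P"
  shows "card (\<Union>B) < card (\<Union>H)"
proof -
  have "\<exists>B'\<in>P. B' \<noteq> B"
  proof (rule ccontr)
    assume "\<not> (\<exists>B'\<in>P. B' \<noteq> B)"
    then have "P = {B}" using B by blast
    then show False using c2 by simp
  qed
  then obtain B' where B': "B' \<in> P" "B' \<noteq> B" by blast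
  have "\<Union>B' \<inter> \<Union>B = {}" using hp_disj[OF hp B'(1) B B'(2)] .
  moreover have "\<Union>B' \<noteq> {}" using hp_ne[OF hp B'(1)] .
  moreover have "\<Union>B' \<subseteq> \<Union>H" using hp_sub[OF hp B'(1)] by (rule Union_mono)
  moreover have "\<Union>B \<subseteq> \<Union>H" using hp_sub[OF hp B] by (rule Union_mono)
  ultimately have "\<Union>B \<subset> \<Union>H" by blast
  then show ?thesis using fin psubset_card_mono by blast
qed


lemma constr_exists:
  assumes "finite (\<Union>H)" "ne H" "atomic H"
  shows "(\<exists>K. is_construction H K) \<and> (\<forall>Y\<in>sat H. \<exists>K. is_construction H K \<and> Y \<in> K)"
  using assms
proof (induction "card (\<Union>H)" arbitrary: H rule: less_induct)
  case less
  have fin: "finite (\<Union>H)" and neH: "ne H" and atH: "atomic H" using less.prems by blast+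
  show ?case
  proof (cases "\<Union>H = {}")
    case True
    then have H0: "H = {}" using carrier_empty[OF neH] by simp
    have "sat H = {}" using True sat_elem by blast
    then show ?thesis using H0 is_construction.empty by blast
  next
    case nonempty: False
    show ?thesis
    proof (cases "hconnected H")
      case conn: True
      have sub: "(\<exists>K. is_construction (restr H (\<Union>H - {x})) K) \<and>
          (\<forall>Y\<in>sat (restr H (\<Union>H - {x})). \<exists>K. is_construction (restr H (\<Union>H - {x})) K \<and> Y \<in> K)"
        if x: "x \<in> \<Union>H" for x
      proof -
        have car: "\<Union>(restr H (\<Union>H - {x})) = \<Union>H - {x}" using atomic_carrier[OF atH] by blast
        have "card (\<Union>H - {x}) < card (\<Union>H)" using card_Diff1_less[OF fin x] .
        then show ?thesis using less.hyps[of "restr H (\<Union>H - {x})"] car fin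
            ne_restr[OF neH] atomic_restr[OF atH] by simp
      qed
      have mk: "is_construction H (K \<union> {\<Union>H})"
        if "x \<in> \<Union>H" "is_construction (restr H (\<Union>H - {x})) K" for x K
        using is_construction.conn[OF nonempty conn that] .
      obtain x0 where x0: "x0 \<in> \<Union>H" using nonempty by blast
      obtain K0 where K0: "is_construction (restr H (\<Union>H - {x0})) K0" using sub[OF x0] by blast
      have ex: "\<exists>K. is_construction H K" using mk[OF x0 K0] by blast
      have "\<exists>K. is_construction H K \<and> Y \<in> K" if Y: "Y \<in> sat H" for Y
      proof (cases "Y = \<Union>H")
        case True
        then show ?thesis using mk[OF x0 K0] by blast
      next
        case False
        have "Y \<subseteq> \<Union>H" using sat_elem[OF Y] by simp
        then obtain x where x: "x \<in> \<Union>H" "x \<notin> Y" using False by blast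
        then have "Y \<in> sat (restr H (\<Union>H - {x}))" using Y sat_restr[of H "\<Union>H - {x}"] \<open>Y \<subseteq> \<Union>H\<close> by blast
        then obtain K where "is_construction (restr H (\<Union>H - {x})) K" "Y \<in> K" using sub[OF x(1)] by blast
        then show ?thesis using mk[OF x(1)] by blast
      qed
      then show ?thesis using ex by blast
    next
      case nconn: False
      obtain P where fp: "finest_partition H P" using fp_exists[OF fin neH] by blast
      have hp: "hyp_partition H P" using fp unfolding finest_partition_def by blast
      have c2: "card P \<ge> 2" using fp_card[OF fin neH nconn fp] .
      have BH: "restr H (\<Union>B) = B" if "B \<in> P" for B using hp_restr[OF neH hp that] .
      have sub: "(\<exists>K. is_construction B K) \<and> (\<forall>Y\<in>sat B. \<exists>K. is_construction B K \<and> Y \<in> K)"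
        if B: "B \<in> P" for B
      proof -
        have lt: "card (\<Union>B) < card (\<Union>H)" using fp_smaller[OF fin neH hp c2 B] .
        have "finite (\<Union>B)" using fin Union_mono[OF hp_sub[OF hp B]] finite_subset by blast
        moreover have "ne B" using ne_sub[OF neH hp_sub[OF hp B]] .
        moreover have "atomic B" using atomic_restr[OF atH, of "\<Union>B"] BH[OF B] by simp
        ultimately show ?thesis using less.hyps[OF lt] by blast
      qed
      define Kc where "Kc = (\<lambda>B::'a set set. SOME K. is_construction B K)"
      have Kc: "is_construction B (Kc B)" if "B \<in> P" for B
        unfolding Kc_def using sub[OF that] by (metis someI_ex)
      have ex: "\<exists>K. is_construction H K"
        using is_construction.disconn[OF nconn fp c2, of Kc] Kc by blast
      have "\<exists>K. is_construction H K \<and> Y \<in> K" if Y: "Y \<in> sat H" for Y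
      proof -
        obtain B0 where B0: "B0 \<in> P" "Y \<subseteq> \<Union>B0" using sat_in_block[OF neH hp Y] by blast
        have "Y \<in> sat B0" using Y B0 sat_restr[of H "\<Union>B0"] BH[OF B0(1)] by simp
        then obtain KY where KY: "is_construction B0 KY" "Y \<in> KY" using sub[OF B0(1)] by blast
        define K' where "K' = Kc(B0 := KY)"
        have "\<forall>B\<in>P. is_construction B (K' B)" unfolding K'_def using Kc KY(1) by simp
        then have "is_construction H (\<Union>B\<in>P. K' B)" using is_construction.disconn[OF nconn fp c2] by blast
        moreover have "Y \<in> (\<Union>B\<in>P. K' B)" using B0(1) KY(2) unfolding K'_def by force
        ultimately show ?thesis by blast
      qed
      then show ?thesis using ex by blast
    qed
  qed
qed

lemma sat_constructions:
  assumes "finite (\<Union>H)" "ne H" "atomic H"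
  shows "sat H = \<Union>(constructions H)"
proof
  show "sat H \<subseteq> \<Union>(constructions H)"
    using constr_exists[OF assms] unfolding constructions_def by blast
  show "\<Union>(constructions H) \<subseteq> sat H"
    using constr_sat assms(2) unfolding constructions_def by blast
qed


lemma conn_insert:
  assumes ne: "ne G" and Y: "Y \<noteq> {}" and G0: "G0 \<subseteq> G" and c0: "hconnected G0" and u0: "\<Union>G0 = Y"
  shows "hconnected (insert Y G) \<longleftrightarrow> hconnected G"
proof -
  have neI: "ne (insert Y G)" using ne Y unfolding ne_def by simp
  have ne0: "ne G0" using ne_sub[OF ne G0] .
  have YG: "Y \<subseteq> \<Union>G" using G0 u0 by blast
  have car: "\<Union>(insert Y G) = \<Union>G" using YG by blast
  have "(\<exists>A B. splits (insert Y G) A B) \<longleftrightarrow> (\<exists>A B. splits G A B)"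
  proof
    assume "\<exists>A B. splits (insert Y G) A B"
    then obtain A B where "splits (insert Y G) A B" by blast
    then have "splits G A B" using car unfolding splits_def by simp
    then show "\<exists>A B. splits G A B" by blast
  next
    assume "\<exists>A B. splits G A B"
    then obtain A B where sp: "splits G A B" by blast
    have "Y \<subseteq> A \<or> Y \<subseteq> B"
    proof (rule ccontr)
      assume nY: "\<not> (Y \<subseteq> A \<or> Y \<subseteq> B)"
      have AB: "A \<inter> B = {}" "A \<union> B = \<Union>G" "\<forall>X\<in>G. X \<subseteq> A \<or> X \<subseteq> B" using sp unfolding splits_def by simp_all
      have "splits G0 (Y \<inter> A) (Y \<inter> B)"
        unfolding splits_def
      proof (intro conjI)
        show "Y \<inter> A \<noteq> {}" using nY YG AB(2) by blast
        show "Y \<inter> B \<noteq> {}" using nY YG AB(2) by blast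
        show "Y \<inter> A \<inter> (Y \<inter> B) = {}" using AB(1) by blast
        show "Y \<inter> A \<union> Y \<inter> B = \<Union>G0" using u0 YG AB(2) by blast
        show "\<forall>X\<in>G0. X \<subseteq> Y \<inter> A \<or> X \<subseteq> Y \<inter> B"
        proof
          fix X assume X: "X \<in> G0"
          then have "X \<subseteq> Y" using u0 by blast
          moreover have "X \<subseteq> A \<or> X \<subseteq> B" using AB(3) X G0 by blast
          ultimately show "X \<subseteq> Y \<inter> A \<or> X \<subseteq> Y \<inter> B" by blast
        qed
      qed
      then show False using split_not_conn[OF ne0] c0 by blast
    qed
    then have "splits (insert Y G) A B" using sp car unfolding splits_def by auto
    then show "\<exists>A B. splits (insert Y G) A B" by blast
  qed
  then show ?thesis using conn_iff[OF neI] conn_iff[OF ne] by simp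
qed

lemma enh_sat:
  assumes ne: "ne H" and Y: "Y \<noteq> {}" and d: "dispensable H Y"
  shows "sat (insert Y H) = sat H" and "\<Union>(insert Y H) = \<Union>H"
proof -
  define G0 where "G0 = restr H Y - {Y}"
  have d': "Y \<subseteq> \<Union>H" "hconnected G0" "\<Union>G0 = Y" using d unfolding dispensable_def G0_def by simp_all
  show car: "\<Union>(insert Y H) = \<Union>H" using d'(1) by blast
  show "sat (insert Y H) = sat H"
  proof (rule set_eqI)
    fix Z
    show "Z \<in> sat (insert Y H) \<longleftrightarrow> Z \<in> sat H"
    proof (cases "Y \<subseteq> Z")
      case False
      then have "restr (insert Y H) Z = restr H Z" unfolding restr_def by auto
      then show ?thesis unfolding sat_iff car by simp
    next
      case True
      then have r: "restr (insert Y H) Z = insert Y (restr H Z)" unfolding restr_def by auto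
      have G0Z: "G0 \<subseteq> restr H Z" using True unfolding G0_def restr_def by auto
      have "hconnected (insert Y (restr H Z)) \<longleftrightarrow> hconnected (restr H Z)"
        using conn_insert[OF ne_restr[OF ne] Y G0Z d'(2,3)] .
      moreover have "\<Union>(insert Y (restr H Z)) = \<Union>(restr H Z)" using G0Z d'(3) by blast
      ultimately show ?thesis unfolding sat_iff car r by simp
    qed
  qed
qed

lemma enh_inv:
  assumes e: "enhances a b"
  shows "(ne a \<and> atomic a \<and> \<Union>a = C \<and> sat a = T) \<longleftrightarrow> (ne b \<and> atomic b \<and> \<Union>b = C \<and> sat b = T)"
proof -
  obtain Y where Y: "Y \<noteq> {}" "dispensable b Y" "Y \<notin> b" "a = insert Y b"
    using e unfolding enhances_def by blast
  have ne: "ne a \<longleftrightarrow> ne b" using Y(1,4) unfolding ne_def by auto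
  have YU: "Y \<subseteq> \<Union>b" using Y(2) unfolding dispensable_def by simp
  have car: "\<Union>a = \<Union>b" using Y(4) YU by blast
  have at: "atomic a \<longleftrightarrow> atomic b"
  proof
    assume "atomic b" then show "atomic a" unfolding atomic_def using car Y(4) by auto
  next
    assume aa: "atomic a"
    show "atomic b" unfolding atomic_def
    proof
      fix x assume x: "x \<in> \<Union>b"
      then have "{x} \<in> a" using aa car unfolding atomic_def by blast
      moreover have "{x} \<noteq> Y"
      proof
        assume xY: "{x} = Y"
        have "\<Union>(restr b Y - {Y}) = Y" using Y(2) unfolding dispensable_def by simp
        then obtain X where "X \<in> restr b Y" "X \<noteq> Y" "x \<in> X" using xY by blast
        then have "X \<subseteq> {x}" "x \<in> X" "X \<noteq> {x}" using xY unfolding restr_iff by auto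
        then show False by blast
      qed
      ultimately show "{x} \<in> b" using Y(4) by simp
    qed
  qed
  show ?thesis
  proof (cases "ne b")
    case True
    then have "sat a = sat b" using enh_sat(1)[OF True Y(1,2)] Y(4) by simp
    then show ?thesis using ne at car by simp
  next
    case False
    then show ?thesis using ne by simp
  qed
qed

lemma equivclp_inv:
  assumes "equivclp enhances H J"
    and "ne H \<and> atomic H \<and> \<Union>H = C \<and> sat H = T"
  shows "ne J \<and> atomic J \<and> \<Union>J = C \<and> sat J = T"
  using assms
proof (induction rule: equivclp_induct)
  case base
  then show ?case .
next
  case (step y z)
  then show ?case using enh_inv[of y z C T] enh_inv[of z y C T] by blast
qed

lemma sat_cognate:
  assumes fin: "finite (\<Union>H)" and ne: "ne H"
  shows "equivclp enhances H (sat H)"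
proof -
  have HS: "H \<subseteq> sat H" using sat_mem[OF ne] by blast
  have SP: "sat H \<subseteq> Pow (\<Union>H)" using sat_elem by blast
  have finS: "finite (sat H)" using SP fin finite_subset by blast
  have key: "F \<subseteq> sat H - H \<Longrightarrow> equivclp enhances (sat H - F) (sat H)" if "finite F" for F
    using that
  proof (induction F rule: finite_induct)
    case empty
    then show ?case by simp
  next
    case (insert Y F)
    define G where "G = sat H - insert Y F"
    have IH: "equivclp enhances (sat H - F) (sat H)" using insert by blast
    have YS: "Y \<in> sat H" and YH: "Y \<notin> H" using insert.prems by blast+
    have HG: "H \<subseteq> G" using HS insert.prems unfolding G_def by blast
    have GS: "G \<subseteq> sat H" unfolding G_def by blast
    have YG: "Y \<notin> G" unfolding G_def by blast
    have iG: "insert Y G = sat H - F" unfolding G_def using YS insert.hyps(2) by blast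
    have Y1: "Y \<noteq> {}" "Y \<subseteq> \<Union>H" "hconnected (restr H Y)" "\<Union>(restr H Y) = Y"
      using sat_elem[OF YS] by simp_all
    define G' where "G' = restr G Y - {Y}"
    have HG': "restr H Y \<subseteq> G'" using HG YH unfolding G'_def restr_def by auto
    have G'Y: "\<Union>G' \<subseteq> Y" unfolding G'_def restr_def by auto
    have uG': "\<Union>G' = Y" using G'Y Union_mono[OF HG'] Y1(4) by blast
    have neG': "ne G'" using GS sat_elem unfolding G'_def ne_def restr_def by blast
    have cG': "hconnected G'"
    proof -
      have "\<not> (\<exists>A B. splits G' A B)"
      proof
        assume "\<exists>A B. splits G' A B"
        then obtain A B where sp: "splits G' A B" by blast
        then have "splits (restr H Y) A B" using HG' uG' Y1(4) unfolding splits_def by auto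
        then show False using split_not_conn[OF ne_restr[OF ne]] Y1(3) by blast
      qed
      then show ?thesis using conn_iff[OF neG'] by blast
    qed
    have "Y \<subseteq> \<Union>G" using Y1(2) HG by blast
    then have "dispensable G Y" unfolding dispensable_def using cG' uG' unfolding G'_def by simp
    then have "enhances (insert Y G) G" unfolding enhances_def using Y1(1) YG by blast
    then have "equivclp enhances G (insert Y G)" by blast
    then show ?case using IH iG equivclp_trans unfolding G_def by metis
  qed
  have "finite (sat H - H)" using finS by simp
  then have "equivclp enhances (sat H - (sat H - H)) (sat H)" using key by blast
  moreover have "sat H - (sat H - H) = H" using HS by blast
  ultimately show ?thesis by simp
qed

theorem proposition4p9:
  fixes H J :: "'a set set"
  assumes "hypergraph H" and "hypergraph J"
    and "atomic H" and "atomic J"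
    and "\<Union>H = \<Union>J"
  shows "cognate H J \<longleftrightarrow> constructions H = constructions J"
proof -
  have finH: "finite (\<Union>H)" and neH: "ne H" using assms(1) unfolding hypergraph_def ne_def by blast+
  have finJ: "finite (\<Union>J)" and neJ: "ne J" using assms(2) unfolding hypergraph_def ne_def by blast+
  show ?thesis
  proof
    assume "cognate H J"
    then have "equivclp enhances H J" unfolding cognate_def .
    then have "ne J \<and> atomic J \<and> \<Union>J = \<Union>H \<and> sat J = sat H"
      using equivclp_inv[of H J "\<Union>H" "sat H"] neH assms(3) by blast
    then have sJ: "sat J = sat H" by blast
    have "constructions H \<subseteq> constructions J"
      using constr_transfer neH neJ assms(3,4,5) sJ unfolding constructions_def by blast
    moreover have "constructions J \<subseteq> constructions H"
      using constr_transfer neH neJ assms(3,4,5) sJ unfolding constructions_def by (metis mem_Collect_eq subsetI)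
    ultimately show "constructions H = constructions J" by blast
  next
    assume "constructions H = constructions J"
    then have sJ: "sat H = sat J"
      using sat_constructions[OF finH neH assms(3)] sat_constructions[OF finJ neJ assms(4)] by simp
    have "equivclp enhances H (sat H)" using sat_cognate[OF finH neH] .
    moreover have "equivclp enhances (sat J) J" using sat_cognate[OF finJ neJ] by (rule equivclp_sym)
    ultimately show "cognate H J" unfolding cognate_def using sJ equivclp_trans by metis
  qed
qed

end
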